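(* Let $K\ge1$, $p_1,\dots,p_K>0$, $c_1,\dots,c_K>0$, and let $\bar B=\frac12\sum_{k=1}^Kp_kc_k$. For $B>0$ consider the problem $$\max_{\mathbf{a}}\ -\sum_{k=1}^K\big[(p_k-a_k)\log(p_k-a_k)+a_k\log a_k\big]\quad\text{s.t.}\quad\sum_{k=1}^Ka_kc_k\le B,\ \ 0\le a_k\le p_k\ \forall k.$$ There is a unique function $\lambda(B)\ge0$, which is one-to-one for $0<B\le\bar B$ and satisfies $\lambda(B)=0$ for $B\ge\bar B$, such that the problem has a unique solution, given by $$a^*_k(B)=\frac{p_k}{1+\exp[\lambda(B)c_k]},\qquad k\in[K].$$
   Context: Here $0\log 0=0$. In the paper $p_k$ is the average (per vertex) number of vertex pairs at distance scale $k$ and $c_k$ the cost of a pair at scale $k$. *)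

theory Defs
  imports Complex_Main
begin

definition xlogx :: "real \<Rightarrow> real" where
  "xlogx x = (if x = 0 then 0 else x * ln x)"

text \<open>Objective of the problem, indices k in {0..<K} (i.e. [K]).\<close>
definition objective :: "nat \<Rightarrow> (nat \<Rightarrow> real) \<Rightarrow> (nat \<Rightarrow> real) \<Rightarrow> real" where
  "objective K p a = - (\<Sum>k<K. xlogx (p k - a k) + xlogx (a k))"

definition feasible :: "nat \<Rightarrow> (nat \<Rightarrow> real) \<Rightarrow> (nat \<Rightarrow> real) \<Rightarrow> real \<Rightarrow> (nat \<Rightarrow> real) \<Rightarrow> bool" where
  "feasible K p c B a \<longleftrightarrow> (\<Sum>k<K. a k * c k) \<le> B \<and> (\<forall>k<K. 0 \<le> a k \<and> a k \<le> p k)"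

definition is_optimal :: "nat \<Rightarrow> (nat \<Rightarrow> real) \<Rightarrow> (nat \<Rightarrow> real) \<Rightarrow> real \<Rightarrow> (nat \<Rightarrow> real) \<Rightarrow> bool" where
  "is_optimal K p c B a \<longleftrightarrow> feasible K p c B a \<and>
     (\<forall>b. feasible K p c B b \<longrightarrow> objective K p b \<le> objective K p a)"

definition unique_solution :: "nat \<Rightarrow> (nat \<Rightarrow> real) \<Rightarrow> (nat \<Rightarrow> real) \<Rightarrow> real \<Rightarrow> (nat \<Rightarrow> real) \<Rightarrow> bool" where
  "unique_solution K p c B x \<longleftrightarrow> is_optimal K p c B x \<and>
     (\<forall>a. is_optimal K p c B a \<longrightarrow> (\<forall>k<K. a k = x k))"

end

theory Submission
  imports Defs
begin

lemma G_le:
  fixes w z R :: real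
  assumes "w \<ge> 0" "z > 0" "R > 0"
  shows "- xlogx w + w * ln z \<le> z/R - w + w * ln R"
    and "- xlogx w + w * ln z = z/R - w + w * ln R \<longleftrightarrow> w = z/R"
proof -
  have main: "- xlogx w + w * ln z \<le> z/R - w + w * ln R \<and>
     (- xlogx w + w * ln z = z/R - w + w * ln R \<longleftrightarrow> w = z/R)"
  proof (cases "w = 0")
    case True
    then show ?thesis using assms by (simp add: xlogx_def)
  next
    case False
    hence wp: "w > 0" using assms by simp
    define u where "u = z / (w * R)"
    have up: "u > 0" using wp assms by (simp add: u_def)
    have lnu: "ln u = ln z - ln w - ln R"
      using wp assms by (simp add: u_def ln_div ln_mult)
    have eq: "- xlogx w + w * ln z - (z/R - w + w * ln R) = w * (ln u - (u - 1))"
    proof -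
      have wu: "w * u = z / R" using wp assms by (simp add: u_def field_simps)
      have "w * (ln u - (u - 1)) = w * ln z - w * ln w - w * ln R - w * u + w"
        unfolding lnu by (simp add: algebra_simps)
      then show ?thesis using wu wp by (simp add: xlogx_def)
    qed
    have le: "ln u \<le> u - 1" using ln_le_minus_one[OF up] .
    have iff: "ln u = u - 1 \<longleftrightarrow> u = 1" using ln_eq_minus_one[OF up] by auto
    have "u = 1 \<longleftrightarrow> w = z/R" using wp assms by (auto simp: u_def field_simps)
    moreover have "w * (ln u - (u - 1)) \<le> 0" using le wp by (simp add: mult_nonneg_nonpos)
    moreover have "w * (ln u - (u - 1)) = 0 \<longleftrightarrow> ln u = u - 1" using wp by simp
    ultimately show ?thesis using eq iff by linarith
  qed
  then show "- xlogx w + w * ln z \<le> z/R - w + w * ln R"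
    and "- xlogx w + w * ln z = z/R - w + w * ln R \<longleftrightarrow> w = z/R" by auto
qed

definition phi :: "real \<Rightarrow> real \<Rightarrow> real \<Rightarrow> real" where
  "phi t p x = - xlogx (p - x) - xlogx x - t * x"

definition Mv :: "real \<Rightarrow> real \<Rightarrow> real" where
  "Mv t p = p * ln ((1 + exp (-t)) / p)"

lemma phi_props:
  fixes p x t :: real
  assumes "p > 0" "0 \<le> x" "x \<le> p"
  shows "phi t p x \<le> Mv t p" and "phi t p x = Mv t p \<longleftrightarrow> x = p / (1 + exp t)"
proof -
  define R where "R = (1 + exp (-t)) / p"
  have Rp: "R > 0" using assms by (simp add: R_def add_pos_pos)
  have A: "- xlogx (p - x) + (p - x) * ln 1 \<le> 1/R - (p - x) + (p - x) * ln R"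
   and A': "- xlogx (p - x) + (p - x) * ln 1 = 1/R - (p - x) + (p - x) * ln R \<longleftrightarrow> p - x = 1/R"
    using G_le[of "p - x" 1 R] assms Rp by auto
  have B: "- xlogx x + x * ln (exp (-t)) \<le> exp (-t)/R - x + x * ln R"
   and B': "- xlogx x + x * ln (exp (-t)) = exp (-t)/R - x + x * ln R \<longleftrightarrow> x = exp (-t)/R"
    using G_le[of x "exp (-t)" R] assms Rp by auto
  have ep: "1 + exp (-t) > 0" by (simp add: add_pos_pos)
  have sumR: "1/R + exp (-t)/R = p"
  proof -
    have "1/R + exp (-t)/R = (1 + exp (-t))/R" by (simp add: add_divide_distrib)
    also have "\<dots> = p" using assms ep by (simp add: R_def)
    finally show ?thesis .
  qed
  have phiE: "phi t p x = (- xlogx (p - x) + (p - x) * ln 1) + (- xlogx x + x * ln (exp (-t)))"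
    by (simp add: phi_def)
  have ME: "Mv t p = (1/R - (p - x) + (p - x) * ln R) + (exp (-t)/R - x + x * ln R)"
    using sumR by (simp add: Mv_def R_def[symmetric] algebra_simps)
  show "phi t p x \<le> Mv t p" using A B phiE ME by linarith
  have x0a: "exp (-t)/R = p / (1 + exp t)"
    using assms by (simp add: R_def exp_minus field_simps add_pos_pos)
  have x0b: "p - exp (-t)/R = 1/R" using sumR by linarith
  show "phi t p x = Mv t p \<longleftrightarrow> x = p / (1 + exp t)"
  proof
    assume "phi t p x = Mv t p"
    then have "x = exp (-t)/R" using A B B' phiE ME by linarith
    then show "x = p / (1 + exp t)" using x0a by simp
  next
    assume "x = p / (1 + exp t)"
    then have h: "x = exp (-t)/R" using x0a by simp
    then have "p - x = 1/R" using x0b by simp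
    then show "phi t p x = Mv t p" using A' B' h phiE ME by linarith
  qed
qed


definition gfun :: "nat \<Rightarrow> (nat \<Rightarrow> real) \<Rightarrow> (nat \<Rightarrow> real) \<Rightarrow> real \<Rightarrow> real" where
  "gfun K p c l = (\<Sum>k<K. p k * c k / (1 + exp (l * c k)))"

lemma opt:
  assumes pp: "\<forall>k<K. p k > 0" and cp: "\<forall>k<K. c k > 0"
    and l0: "l \<ge> 0" and gB: "gfun K p c l \<le> B" and lB: "l = 0 \<or> gfun K p c l = B"
  shows "unique_solution K p c B (\<lambda>k. p k / (1 + exp (l * c k)))"
proof -
  define a where "a = (\<lambda>k. p k / (1 + exp (l * c k)))"
  have obj: "objective K p b = (\<Sum>k<K. phi (l * c k) (p k) (b k)) + l * (\<Sum>k<K. b k * c k)" for b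
    unfolding objective_def phi_def
    by (simp add: sum_distrib_left sum.distrib[symmetric] sum_negf[symmetric] algebra_simps)
  have ep: "\<And>k. 1 + exp (l * c k) > 0" by (simp add: add_pos_pos)
  have abnd: "0 \<le> a k \<and> a k \<le> p k" if "k < K" for k
  proof -
    have "p k > 0" using pp that by auto
    moreover have "1 \<le> 1 + exp (l * c k)" by simp
    ultimately show ?thesis using ep[of k] by (auto simp: a_def divide_le_eq)
  qed
  have ga: "(\<Sum>k<K. a k * c k) = gfun K p c l" unfolding gfun_def a_def by simp
  have feasa: "feasible K p c B a" unfolding feasible_def using abnd ga gB by auto
  have Ma: "phi (l * c k) (p k) (a k) = Mv (l * c k) (p k)" if "k < K" for k
    using phi_props(2)[of "p k" "a k" "l * c k"] abnd[OF that] pp that by (auto simp: a_def)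
  have lam: "l * (\<Sum>k<K. b k * c k) \<le> l * (\<Sum>k<K. a k * c k)" if "feasible K p c B b" for b
  proof -
    have "(\<Sum>k<K. b k * c k) \<le> B" using that by (simp add: feasible_def)
    then have "l * (\<Sum>k<K. b k * c k) \<le> l * B" using l0 by (simp add: mult_left_mono)
    then show ?thesis using lB ga by auto
  qed
  have phib: "phi (l * c k) (p k) (b k) \<le> Mv (l * c k) (p k)" if "feasible K p c B b" "k < K" for b k
    using phi_props(1)[of "p k" "b k" "l * c k"] that pp by (auto simp: feasible_def)
  have oa: "objective K p a = (\<Sum>k<K. Mv (l * c k) (p k)) + l * (\<Sum>k<K. a k * c k)"
    using obj[of a] Ma by simp
  have le: "objective K p b \<le> objective K p a" if "feasible K p c B b" for b
  proof -
    have "(\<Sum>k<K. phi (l * c k) (p k) (b k)) \<le> (\<Sum>k<K. Mv (l * c k) (p k))"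
      by (rule sum_mono) (use phib[OF that] in auto)
    then show ?thesis using obj[of b] oa lam[OF that] by linarith
  qed
  have optA: "is_optimal K p c B a" unfolding is_optimal_def using feasa le by auto
  have uniq: "b k = a k" if ob: "is_optimal K p c B b" and k: "k < K" for b k
  proof -
    have fb: "feasible K p c B b" using ob by (simp add: is_optimal_def)
    have "objective K p a \<le> objective K p b" using ob feasa by (simp add: is_optimal_def)
    then have S: "(\<Sum>k<K. Mv (l * c k) (p k)) \<le> (\<Sum>k<K. phi (l * c k) (p k) (b k))"
      using obj[of b] oa lam[OF fb] by linarith
    have "phi (l * c k) (p k) (b k) = Mv (l * c k) (p k)"
    proof (rule ccontr)
      assume "phi (l * c k) (p k) (b k) \<noteq> Mv (l * c k) (p k)"
      then have "phi (l * c k) (p k) (b k) < Mv (l * c k) (p k)" using phib[OF fb k] by linarith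
      then have "(\<Sum>k<K. phi (l * c k) (p k) (b k)) < (\<Sum>k<K. Mv (l * c k) (p k))"
        by (intro sum_strict_mono_ex1) (use phib[OF fb] k in auto)
      then show False using S by linarith
    qed
    then show ?thesis using phi_props(2)[of "p k" "b k" "l * c k"] pp k fb
      by (auto simp: feasible_def a_def)
  qed
  show ?thesis unfolding unique_solution_def a_def[symmetric] using optA uniq by auto
qed


lemma g_small:
  assumes pp: "\<forall>k<K. p k > 0" and cp: "\<forall>k<K. c k > 0" and L: "L > 0"
  shows "gfun K p c L \<le> (\<Sum>k<K. p k) / L"
proof -
  have "p k * c k / (1 + exp (L * c k)) \<le> p k / L" if "k < K" for k
  proof -
    have pc: "p k > 0" "c k > 0" using pp cp that by auto
    have "L * c k \<le> 1 + exp (L * c k)"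
      using exp_ge_add_one_self[of "L * c k"] by linarith
    moreover have "L * c k > 0" using L pc by simp
    ultimately have "p k * c k / (1 + exp (L * c k)) \<le> p k * c k / (L * c k)"
      using pc by (intro divide_left_mono) (auto simp: add_pos_pos)
    also have "\<dots> = p k / L" using pc by simp
    finally show ?thesis .
  qed
  then have "gfun K p c L \<le> (\<Sum>k<K. p k / L)" unfolding gfun_def by (intro sum_mono) auto
  also have "\<dots> = (\<Sum>k<K. p k) / L" by (simp add: sum_divide_distrib)
  finally show ?thesis .
qed

lemma g_exists:
  assumes K: "K \<ge> 1" and pp: "\<forall>k<K. p k > 0" and cp: "\<forall>k<K. c k > 0"
    and B: "0 < B" "B < gfun K p c 0"
  shows "\<exists>l\<ge>0. gfun K p c l = B"
proof -
  define P where "P = (\<Sum>k<K. p k)"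
  have P: "P > 0" unfolding P_def using K pp
    by (intro sum_pos) (auto simp: lessThan_empty_iff)
  define L where "L = 2 * P / B"
  have Lp: "L > 0" using P B by (simp add: L_def)
  have "gfun K p c L \<le> P / L" using g_small[OF pp cp Lp] by (simp add: P_def)
  also have "\<dots> = B / 2" using P B by (simp add: L_def)
  finally have gL: "gfun K p c L \<le> B" using B by linarith
  have cont: "\<forall>x. 0 \<le> x \<and> x \<le> L \<longrightarrow> isCont (gfun K p c) x"
  proof (intro allI impI)
    fix x
    have ne: "\<And>k. 1 + exp (x * c k) \<noteq> 0" by (metis add_pos_pos exp_gt_zero less_irrefl zero_less_one)
    show "isCont (gfun K p c) x" unfolding gfun_def
      by (intro continuous_intros ne)
  qed
  obtain l where "0 \<le> l" "l \<le> L" "gfun K p c l = B"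
    using IVT2[of "gfun K p c" L B 0] gL B Lp cont by auto
  then show ?thesis by auto
qed

theorem lemma2:
  fixes K :: nat and p c :: "nat \<Rightarrow> real" and Bbar :: real
  assumes "K \<ge> 1"
    and "\<forall>k<K. p k > 0"
    and "\<forall>k<K. c k > 0"
    and "Bbar = (1/2) * (\<Sum>k<K. p k * c k)"
  shows "\<exists>lam :: real \<Rightarrow> real.
      (\<forall>B>0. lam B \<ge> 0)
    \<and> inj_on lam {0<..Bbar}
    \<and> (\<forall>B\<ge>Bbar. lam B = 0)
    \<and> (\<forall>B>0. unique_solution K p c B (\<lambda>k. p k / (1 + exp (lam B * c k))))
    \<and> (\<forall>\<mu> :: real \<Rightarrow> real.
          ((\<forall>B>0. \<mu> B \<ge> 0) \<and>
           (\<forall>B>0. unique_solution K p c B (\<lambda>k. p k / (1 + exp (\<mu> B * c k)))))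
          \<longrightarrow> (\<forall>B>0. \<mu> B = lam B))"
proof -
  note K = assms(1) and pp = assms(2) and cp = assms(3)
  have g0: "gfun K p c 0 = Bbar" unfolding gfun_def assms(4)
    by (simp add: sum_distrib_left)
  define lam where "lam B = (if B \<ge> Bbar then 0 else (SOME l. l \<ge> 0 \<and> gfun K p c l = B))" for B
  have lamB: "lam B \<ge> 0 \<and> gfun K p c (lam B) = B" if "0 < B" "B < Bbar" for B
  proof -
    have "\<exists>l\<ge>0. gfun K p c l = B" using g_exists[OF K pp cp] that g0 by auto
    then have "(SOME l. l \<ge> 0 \<and> gfun K p c l = B) \<ge> 0 \<and> gfun K p c (SOME l. l \<ge> 0 \<and> gfun K p c l = B) = B"
      by (rule someI_ex[where P = "\<lambda>l. l \<ge> 0 \<and> gfun K p c l = B"]) 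
    then show ?thesis using that by (simp add: lam_def)
  qed
  have pos: "\<forall>B>0. lam B \<ge> 0"
    using lamB by (auto simp: lam_def not_le)
  have big: "\<forall>B\<ge>Bbar. lam B = 0" by (simp add: lam_def)
  have geq: "gfun K p c (lam B) = B" if "0 < B" "B \<le> Bbar" for B
    using lamB[OF that(1)] g0 that big by (cases "B < Bbar") auto
  have inj: "inj_on lam {0<..Bbar}"
    by (rule inj_onI) (metis geq greaterThanAtMost_iff)
  have us: "unique_solution K p c B (\<lambda>k. p k / (1 + exp (lam B * c k)))" if "B > 0" for B
  proof (cases "B < Bbar")
    case True
    then show ?thesis using lamB[OF that True] by (intro opt[OF pp cp]) auto
  next
    case False
    then have "lam B = 0" using big by simp
    then show ?thesis using False g0 by (intro opt[OF pp cp]) auto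
  qed
  have un: "\<forall>B>0. \<mu> B = lam B" if "\<forall>B>0. unique_solution K p c B (\<lambda>k. p k / (1 + exp (\<mu> B * c k)))" for \<mu>
  proof (intro allI impI)
    fix B :: real assume B: "B > 0"
    have "is_optimal K p c B (\<lambda>k. p k / (1 + exp (\<mu> B * c k)))"
      using that B by (simp add: unique_solution_def)
    then have "p 0 / (1 + exp (\<mu> B * c 0)) = p 0 / (1 + exp (lam B * c 0))"
      using us[OF B] K unfolding unique_solution_def by auto
    moreover have "p 0 > 0" "c 0 > 0" using pp cp K by auto
    moreover have "1 + exp (\<mu> B * c 0) > 0" "1 + exp (lam B * c 0) > 0" by (simp_all add: add_pos_pos)
    ultimately have "exp (\<mu> B * c 0) = exp (lam B * c 0)" by (simp add: field_simps)
    then have "\<mu> B * c 0 = lam B * c 0" by simp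
    then show "\<mu> B = lam B" using \<open>c 0 > 0\<close> by simp
  qed
  show ?thesis
    apply (rule exI[of _ lam])
    using pos inj big us un by blast
qed

end
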